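(* $$\sum_{k=1}^\infty\frac{26975k^2-17111k+2968}{k(-8)^k\binom{4k}k}=-297-120\log2.$$ *)

theory Defs
  imports Complex_Main
begin

end

theory Submission imports Defs "HOL-Analysis.Analysis" begin
definition Dp :: "real \<Rightarrow> real" where "Dp x = 8 + x*(1-x)^3"
definition Dd :: "real \<Rightarrow> real" where "Dd x = 1 - 6*x + 9*x^2 - 4*x^3"
definition Cp :: "real \<Rightarrow> real" where "Cp x = 8 - 7*x + 4*x^2 - x^3"
definition Qp :: "real \<Rightarrow> real" where "Qp x = -259520 -154160*x +339288*x^2 -304224*x^3 +115280*x^4 -24144*x^5 +10968*x^6 -2016*x^7"
definition Qd :: "real \<Rightarrow> real" where "Qd x = -154160 + 2*339288*x - 3*304224*x^2 + 4*115280*x^3 - 5*24144*x^4 + 6*10968*x^5 - 7*2016*x^6"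
definition Np :: "real \<Rightarrow> real" where "Np x = - ((1-x)^3 * (821248 - 305200*(x*(1-x)^3) + 2968*(x*(1-x)^3)^2))"

lemma Np_eq: "Np x = Qd x * Dp x - 2*Qp x*Dd x + (-712*Dd x - 120*Cp x)*(Dp x)^2"
  unfolding Np_def Qd_def Dp_def Qp_def Dd_def Cp_def by algebra
lemma Dp_Cp: "Dp x = (1+x) * Cp x" unfolding Dp_def Cp_def by algebra
lemma Qp_deriv: "(Qp has_real_derivative Qd x) (at x within s)"
  unfolding Qp_def[abs_def] Qd_def
  by (auto intro!: derivative_eq_intros simp: algebra_simps)
lemma Dp_deriv: "(Dp has_real_derivative Dd x) (at x within s)"
  unfolding Dp_def[abs_def] Dd_def
  apply (auto intro!: derivative_eq_intros)
  apply (simp add: algebra_simps power2_eq_square power3_eq_cube)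
  done
lemma Dp_pos: "0 \<le> x \<Longrightarrow> x \<le> 1 \<Longrightarrow> Dp x \<ge> 8" unfolding Dp_def by simp
lemma F_deriv:
  assumes "0 \<le> x" "x \<le> 1"
  shows "((\<lambda>x. Qp x / (Dp x)^2 - 712 * ln (Dp x) - 120 * ln (1+x)) has_real_derivative Np x / (Dp x)^3) (at x within s)"
proof -
  have D: "Dp x \<ge> 8" using Dp_pos assms by auto
  have x1: "1 + x > 0" using assms by simp
  have C: "Cp x = Dp x / (1+x)" using Dp_Cp[of x] x1 by simp
  have d1: "((\<lambda>x. Qp x / (Dp x)^2) has_real_derivative (Qd x * (Dp x)^2 - Qp x * (2 * Dp x * Dd x)) / ((Dp x)^2 * (Dp x)^2)) (at x within s)"
    apply (rule DERIV_divide[OF Qp_deriv])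
    using D by (auto intro!: derivative_eq_intros Dp_deriv)
  have d2: "((\<lambda>x. ln (Dp x)) has_real_derivative Dd x / Dp x) (at x within s)"
    using D by (auto intro!: derivative_eq_intros Dp_deriv simp: field_simps)
  have d3: "((\<lambda>x. ln (1+x)) has_real_derivative 1 / (1+x)) (at x within s)"
    using x1 by (auto intro!: derivative_eq_intros simp: field_simps)
  have e: "(Qd x * (Dp x)^2 - Qp x * (2 * Dp x * Dd x)) / ((Dp x)^2 * (Dp x)^2) - 712 * (Dd x / Dp x) - 120 * (1/(1+x)) = Np x / (Dp x)^3"
  proof -
    have h: "120 * (1/(1+x)) = 120 * Cp x / Dp x" using Dp_Cp[of x] x1 D by (simp add: field_simps)
    show ?thesis unfolding Np_eq h using D by (simp add: field_simps power2_eq_square power3_eq_cube)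
  qed
  show ?thesis using DERIV_diff[OF DERIV_diff[OF d1 DERIV_cmult[OF d2, of 712]] DERIV_cmult[OF d3, of 120]] e by simp
qed

lemma F_integral: "((\<lambda>x. Np x / (Dp x)^3) has_integral (-297 - 120 * ln 2)) {0..1}"
proof -
  let ?F = "\<lambda>x. Qp x / (Dp x)^2 - 712 * ln (Dp x) - 120 * ln (1+x)"
  have "((\<lambda>x. Np x / (Dp x)^3) has_integral (?F 1 - ?F 0)) {0..1}"
    by (rule fundamental_theorem_of_calculus)
       (auto simp: has_real_derivative_iff_has_vector_derivative[symmetric] intro!: F_deriv)
  moreover have "?F 1 - ?F 0 = -297 - 120 * ln 2"
    by (simp add: Qp_def Dp_def)
  ultimately show ?thesis by (simp only:)
qed

definition cc :: "nat \<Rightarrow> real" where "cc k = 26975 * (real k)^2 - 17111 * real k + 2968"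
definition uu :: "real \<Rightarrow> real" where "uu x = - (x*(1-x)^3) / 8"
definition ff :: "nat \<Rightarrow> real \<Rightarrow> real" where "ff n x = cc (n+1) * (- ((1-x)^3 / 8)) * uu x ^ n"

lemma beta_int: "((\<lambda>x. x^n * (1-x)^(3*n+3)) has_integral (fact n * fact (3*n+3) / fact (4*n+4))) {0..(1::real)}"
proof -
  have B: "((\<lambda>t. t powr (real (n+1) - 1) * (1 - t) powr (real (3*n+4) - 1)) has_integral Beta (real (n+1)) (real (3*n+4))) {0..1}"
    by (rule has_integral_Beta_real) auto
  have "Beta (real (n+1)) (real (3*n+4)) = fact n * fact (3*n+3) / fact (4*n+4)"
  proof -
    have g: "Gamma (real (m+1)) = fact m" for m
      using Gamma_fact[of m, where 'a=real] by (simp add: add.commute)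
    have "real (n+1) + real (3*n+4) = real ((4*n+4)+1)" by simp
    then show ?thesis unfolding Beta_def
      using g[of n] g[of "3*n+3"] g[of "4*n+4"] by (simp add: add.commute)
  qed
  with B have B': "((\<lambda>t. t powr (real (n+1) - 1) * (1 - t) powr (real (3*n+4) - 1)) has_integral (fact n * fact (3*n+3) / fact (4*n+4))) {0<..<1}"
    by (simp add: has_integral_Icc_iff_Ioo)
  have "((\<lambda>x. x^n * (1-x)^(3*n+3)) has_integral (fact n * fact (3*n+3) / fact (4*n+4))) {0<..<(1::real)}"
  proof -
    have eq: "x powr (real (n+1) - 1) * (1 - x) powr (real (3*n+4) - 1) = x^n * (1-x)^(3*n+3)"
      if "x \<in> {0<..<1}" for x :: real
    proof -
      have r: "real (n+1) - 1 = real n" "real (3*n+4) - 1 = real (3*n+3)" by simp_all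
      have a: "x powr real n = x^n" using that by (intro powr_realpow) auto
      have b: "(1-x) powr real (3*n+3) = (1-x)^(3*n+3)" using that by (intro powr_realpow) auto
      show ?thesis unfolding r a b ..
    qed
    note foo = has_integral_eq[OF eq B']
    thm foo
    show ?thesis by (rule foo)
  qed
  then show ?thesis by (simp add: has_integral_Icc_iff_Ioo)
qed

lemma ff_alt: "ff n x = (cc (n+1) * (-1/8)^(n+1)) * (x^n * (1-x)^(3*n+3))"
proof -
  have p: "uu x = (-1/8) * (x*(1-x)^3)" unfolding uu_def by simp
  have "uu x ^ n = (-1/8)^n * (x^n * (1-x)^(3*n))"
    unfolding p power_mult_distrib power_mult ..
  then show ?thesis unfolding ff_def by (simp add: power_add algebra_simps)
qed

lemma ff_integral: "(ff n has_integral (let k = n+1 in (26975 * (real k)^2 - 17111 * real k + 2968) / (real k * (-8) ^ k * real ((4 * k) choose k)))) {0..1}"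
proof -
  have "((\<lambda>x. (cc (n+1) * (-1/8)^(n+1)) * (x^n * (1-x)^(3*n+3))) has_integral
        (cc (n+1) * (-1/8)^(n+1)) * (fact n * fact (3*n+3) / fact (4*n+4))) {0..1}"
    by (rule has_integral_mult_right[OF beta_int])
  moreover have "(cc (n+1) * (-1/8)^(n+1)) * (fact n * fact (3*n+3) / fact (4*n+4)) =
     (let k = n+1 in (26975 * (real k)^2 - 17111 * real k + 2968) / (real k * (-8) ^ k * real ((4 * k) choose k)))"
  proof -
    have b: "real ((4*(n+1)) choose (n+1)) = fact (4*n+4) / (fact (n+1) * fact (3*n+3))"
      by (subst binomial_fact) (auto simp: algebra_simps)
    have f: "(fact (n+1) :: real) = real (n+1) * fact n" by (simp add: fact_Suc del: of_nat_Suc)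
    have e: "((-1/8::real)^(n+1)) = 1 / (-8)^(n+1)" by (simp add: power_one_over[symmetric])
    have aux: "a * (1/e) * (P*R/F) = a / (k * e * (F/(k*P*R)))" if "k \<noteq> 0" "e \<noteq> 0" "F \<noteq> 0" "P \<noteq> 0" "R \<noteq> 0"
      for a e P F k R :: real using that by (simp add: field_simps)
    show ?thesis unfolding Let_def b f e cc_def mult.assoc[symmetric]
      by (rule aux) auto
  qed
  ultimately show ?thesis by (simp add: ff_alt[abs_def])
qed

lemma sums_sq:
  fixes z :: real
  assumes "norm z < 1"
  shows "(\<lambda>n. (real (Suc n))^2 * z^n) sums ((1+z)/(1-z)^3)"
proof -
  have A: "(\<lambda>n. diffs (\<lambda>n. of_nat (Suc n)) n * z^n) sums (2/(1-z)^3)"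
  proof (rule termdiffs_sums_strong[where K=1])
    fix w :: real assume "norm w < 1"
    then show "(\<lambda>n. of_nat (Suc n) * w^n) sums (1/(1-w)^2)" by (rule geometric_deriv_sums)
  next
    have "z \<noteq> 1" using assms by auto
    have aux1: "(a::real) \<noteq> 0 \<Longrightarrow> (2 * a) / a^4 = 2 / a^3" for a
      by (simp add: field_simps eval_nat_numeral)
    show "((\<lambda>w. 1/(1-w)^2) has_field_derivative 2/(1-z)^3) (at z)"
      using \<open>z \<noteq> 1\<close> apply (auto intro!: derivative_eq_intros)
      using aux1[of "1-z"] \<open>z \<noteq> 1\<close> by (simp add: algebra_simps)
  qed (use assms in auto)
  have B: "(\<lambda>n. of_nat (Suc n) * z^n) sums (1/(1-z)^2)" by (rule geometric_deriv_sums[OF assms])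
  have "(\<lambda>n. diffs (\<lambda>n. of_nat (Suc n)) n * z^n - of_nat (Suc n) * z^n) sums (2/(1-z)^3 - 1/(1-z)^2)"
    by (rule sums_diff[OF A B])
  moreover have "2/(1-z)^3 - 1/(1-z)^2 = (1+z)/(1-z)^3"
  proof -
    have "1 - z \<noteq> 0" using assms by auto
    have aux2: "(a::real) \<noteq> 0 \<Longrightarrow> 2/a^3 - 1/a^2 = (2-a)/a^3" for a
      by (simp add: field_simps eval_nat_numeral)
    show ?thesis using aux2[OF \<open>1 - z \<noteq> 0\<close>] by simp
  qed
  moreover have "diffs (\<lambda>n. of_nat (Suc n)) n * z^n - of_nat (Suc n) * z^n = (real (Suc n))^2 * z^n" for n
    by (simp add: diffs_def algebra_simps power2_eq_square)
  ultimately show ?thesis by simp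
qed

lemma uu_bound: "0 \<le> x \<Longrightarrow> x \<le> 1 \<Longrightarrow> \<bar>uu x\<bar> \<le> 1/8"
proof -
  assume x: "0 \<le> x" "x \<le> 1"
  have "(1-x)^3 \<le> 1" using x by (intro power_le_one) auto
  then have "x * (1-x)^3 \<le> 1" using x by (intro mult_le_one) auto
  moreover have "0 \<le> x * (1-x)^3" using x by simp
  ultimately show ?thesis unfolding uu_def by simp
qed

lemma ff_sums:
  assumes x: "0 \<le> x" "x \<le> 1"
  shows "(\<lambda>n. ff n x) sums (Np x / (Dp x)^3)"
proof -
  define z where "z = uu x"
  have z: "norm z < 1" using uu_bound[OF x] unfolding z_def by simp
  have "(\<lambda>n. 26975 * ((real (Suc n))^2 * z^n) - 17111 * (of_nat (Suc n) * z^n) + 2968 * z^n) sums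
      (26975 * ((1+z)/(1-z)^3) - 17111 * (1/(1-z)^2) + 2968 * (1/(1-z)))"
    by (intro sums_add sums_diff sums_mult sums_sq geometric_deriv_sums geometric_sums z)
  then have "(\<lambda>n. (- ((1-x)^3/8)) * (26975 * ((real (Suc n))^2 * z^n) - 17111 * (of_nat (Suc n) * z^n) + 2968 * z^n)) sums
      ((- ((1-x)^3/8)) * (26975 * ((1+z)/(1-z)^3) - 17111 * (1/(1-z)^2) + 2968 * (1/(1-z))))"
    by (rule sums_mult)
  moreover have "(\<lambda>n. (- ((1-x)^3/8)) * (26975 * ((real (Suc n))^2 * z^n) - 17111 * (of_nat (Suc n) * z^n) + 2968 * z^n)) = (\<lambda>n. ff n x)"
    by (rule ext) (simp add: ff_def cc_def z_def algebra_simps)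
  moreover have "(- ((1-x)^3/8)) * (26975 * ((1+z)/(1-z)^3) - 17111 * (1/(1-z)^2) + 2968 * (1/(1-z))) = Np x / (Dp x)^3"
  proof -
    have z1: "1 - z = Dp x / 8" by (simp add: z_def uu_def Dp_def)
    have D: "Dp x \<ge> 8" using Dp_pos x by auto
    have gen: "26975 * ((1+z)/(1-z)^3) - 17111 * (1/(1-z)^2) + 2968 * (1/(1-z)) = 512*(12832 + 38150*z + 2968*z^2)/d^3"
      if "d \<noteq> 0" "z = 1 - d/8" for z d :: real
      using that(1) unfolding that(2) by (simp add: field_simps eval_nat_numeral)
    have "(- ((1-x)^3/8)) * (26975 * ((1+z)/(1-z)^3) - 17111 * (1/(1-z)^2) + 2968 * (1/(1-z)))
       = - ((1-x)^3 * (64 * (12832 + 38150*z + 2968*z^2))) / (Dp x)^3"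
      using D z1 by (subst gen[of "Dp x"]) (auto simp: field_simps)
    also have "\<dots> = Np x / (Dp x)^3"
      unfolding Np_def z_def uu_def by (simp add: algebra_simps power2_eq_square)
    finally show ?thesis .
  qed
  ultimately show ?thesis by simp
qed

lemma ff_bound:
  assumes x: "x \<in> {0..1}"
  shows "norm (ff n x) \<le> 6000 * ((real (Suc n))^2 * (1/8)^n)"
proof -
  have x0: "0 \<le> x" "x \<le> 1" using x by auto
  have k1: "1 \<le> real (Suc n)" by simp
  have k2: "real (Suc n) \<le> (real (Suc n))^2" using k1 by (simp add: power2_eq_square)
  have c: "\<bar>cc (n+1)\<bar> \<le> 47054 * (real (Suc n))^2"
    unfolding cc_def using k1 k2 by simp
  have v: "\<bar>- ((1-x)^3/8)\<bar> \<le> 1/8"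
  proof -
    have "(1-x)^3 \<le> 1" "0 \<le> (1-x)^3" using x0 by (auto intro: power_le_one)
    then show ?thesis by simp
  qed
  have u: "\<bar>uu x ^ n\<bar> \<le> (1/8)^n"
    unfolding power_abs by (intro power_mono uu_bound x0) auto
  have "norm (ff n x) = \<bar>cc (n+1)\<bar> * \<bar>- ((1-x)^3/8)\<bar> * \<bar>uu x ^ n\<bar>"
    unfolding ff_def by (simp add: abs_mult)
  also have "\<dots> \<le> (47054 * (real (Suc n))^2) * (1/8) * (1/8)^n"
    by (intro mult_mono c v u) auto
  also have "\<dots> \<le> 6000 * ((real (Suc n))^2 * (1/8)^n)" by simp
  finally show ?thesis .
qed

theorem lemma3p2:
  shows "(\<lambda>n. let k = n + 1 in
            (26975 * (real k)^2 - 17111 * real k + 2968)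
            / (real k * (-8) ^ k * real ((4 * k) choose k)))
         sums (-297 - 120 * ln 2)"
proof -
  define t where "t = (\<lambda>n. let k = n + 1 in
            (26975 * (real k)^2 - 17111 * real k + 2968)
            / (real k * (-8) ^ k * real ((4 * k) choose k)))"
  have ti: "(ff n has_integral t n) {0..1}" for n
    unfolding t_def using ff_integral[of n] by simp
  have summ: "summable (\<lambda>n. 6000 * ((real (Suc n))^2 * (1/8::real)^n))"
    by (intro summable_mult sums_summable[OF sums_sq]) simp
  have U: "uniform_limit {0..1} (\<lambda>N x. \<Sum>i<N. ff i x) (\<lambda>x. \<Sum>i. ff i x) sequentially"
    by (rule Weierstrass_m_test[OF ff_bound summ])
  have C: "continuous_on {0..1} (\<lambda>x. \<Sum>i<N. ff i x)" for N
    unfolding ff_def uu_def by (intro continuous_intros) auto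
  obtain I J where I: "\<And>N. ((\<lambda>x. \<Sum>i<N. ff i x) has_integral I N) {0..1}"
    and J: "((\<lambda>x. \<Sum>i. ff i x) has_integral J) {0..(1::real)}"
    and lim: "I \<longlonglongrightarrow> J"
    by (rule uniform_limit_integral[OF U C]) auto
  have IN: "I N = (\<Sum>i<N. t i)" for N
    by (rule has_integral_unique[OF I has_integral_sum[OF finite_lessThan ti]])
  have "((\<lambda>x. \<Sum>i. ff i x) has_integral (-297 - 120 * ln 2)) {0..1}"
  proof (rule has_integral_eq[OF _ F_integral])
    fix x :: real assume "x \<in> {0..1}"
    then show "Np x / (Dp x)^3 = (\<Sum>i. ff i x)"
      using ff_sums[of x] by (auto simp: sums_iff)
  qed
  then have "J = -297 - 120 * ln 2" using J by (rule has_integral_unique[rotated])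
  moreover have "I = (\<lambda>N. \<Sum>i<N. t i)" using IN by (intro ext) simp
  ultimately have "(\<lambda>N. \<Sum>i<N. t i) \<longlonglongrightarrow> -297 - 120 * ln 2" using lim by simp
  then show ?thesis unfolding t_def sums_def .
qed
end
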